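(* Consider the system $$\frac{df}{dt}= r\alpha f m(1-f-m)-(1+h)f,\qquad \frac{dm}{dt}=(1-r)\alpha f m(1-f-m)+(s-1)m,$$ with $0<r<1$, $\alpha>0$, $h\ge 0$, $0\le s<1$, and let $\mu=\frac{(1-r)(1+h)}{r(1-s)}$. Let $E_i^*=(f_i^*,\mu f_i^* )$ be an interior equilibrium, where $f_i^*$ is a positive root of $rα\mu f(1-(1+\mu)f)=1+h$. If $$\frac{r(1-s)}{2\{1+h-r(h+s)\}}<f^*_i<\frac{r(1-s)}{1+h-r(h+s)},$$ then $E_i^*$ is locally asymptotically stable.
   Context: Nondimensionalized FHMS (female harvesting, male stocking) model without Allee effect; $f,m$ are scaled female and male densities, $r$ the primary sex ratio, $h$ the scaled harvesting rate, $s$ the scaled stocking rate. Interior equilibria are those with $f>0,m>0$; they satisfy $m=\mu f$. *)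

theory Defs
  imports "HOL-Analysis.Analysis"
begin

definition fhms_field :: "real \<Rightarrow> real \<Rightarrow> real \<Rightarrow> real \<Rightarrow> real \<times> real \<Rightarrow> real \<times> real" where
  "fhms_field r \<alpha> h s = (\<lambda>(f, m).
     (r * \<alpha> * f * m * (1 - f - m) - (1 + h) * f,
      (1 - r) * \<alpha> * f * m * (1 - f - m) + (s - 1) * m))"

definition fhms_mu :: "real \<Rightarrow> real \<Rightarrow> real \<Rightarrow> real" where
  "fhms_mu r h s = ((1 - r) * (1 + h)) / (r * (1 - s))"

definition ode_solution :: "('a::real_normed_vector \<Rightarrow> 'a) \<Rightarrow> (real \<Rightarrow> 'a) \<Rightarrow> real set \<Rightarrow> bool" where
  "ode_solution F x I \<longleftrightarrow> (\<forall>t\<in>I. (x has_vector_derivative F (x t)) (at t within I))"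

definition loc_asym_stable :: "('a::real_normed_vector \<Rightarrow> 'a) \<Rightarrow> 'a \<Rightarrow> bool" where
  "loc_asym_stable F e \<longleftrightarrow>
     (\<forall>\<epsilon>>0. \<exists>\<delta>>0. \<forall>T>0. \<forall>x. ode_solution F x {0..<T} \<and> dist (x 0) e < \<delta>
                \<longrightarrow> (\<forall>t\<in>{0..<T}. dist (x t) e < \<epsilon>)) \<and>
     (\<exists>\<delta>>0. \<forall>x. ode_solution F x {0..} \<and> dist (x 0) e < \<delta> \<longrightarrow> (x \<longlongrightarrow> e) at_top)"

end

theory Submission
  imports Defs
begin

lemma abs_le_sqrt_sum: fixes u :: real shows "\<bar>u\<bar> \<le> sqrt (u^2 + v^2)"
  by (metis abs_ge_zero le_add_same_cancel1 real_sqrt_abs real_sqrt_le_mono zero_le_power2)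

lemma cs2: fixes x :: real shows "(x * u + y * v)^2 \<le> (x^2 + y^2) * (u^2 + v^2)"
proof -
  have "(x^2 + y^2) * (u^2 + v^2) - (x * u + y * v)^2 = (x * v - y * u)^2"
    by (simp add: power2_eq_square algebra_simps)
  then show ?thesis by (metis diff_ge_0_iff_ge zero_le_power2)
qed

lemma lin_bound: fixes x :: real shows "\<bar>x * u + y * v\<bar> \<le> (\<bar>x\<bar> + \<bar>y\<bar>) * sqrt (u^2 + v^2)"
proof -
  have "\<bar>x * u\<bar> \<le> \<bar>x\<bar> * sqrt (u^2 + v^2)"
    by (simp add: abs_mult abs_le_sqrt_sum mult_left_mono)
  moreover have "\<bar>y * v\<bar> \<le> \<bar>y\<bar> * sqrt (u^2 + v^2)"
    using abs_le_sqrt_sum[of v u] by (simp add: abs_mult mult_left_mono add.commute)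
  ultimately show ?thesis by (simp add: algebra_simps abs_triangle_ineq order_trans[OF abs_triangle_ineq])
qed

lemma lin_bound2: fixes x :: real assumes "\<bar>u\<bar> \<le> B" "\<bar>v\<bar> \<le> B" shows "\<bar>x * u + y * v\<bar> \<le> (\<bar>x\<bar> + \<bar>y\<bar>) * B"
proof -
  have "\<bar>x * u\<bar> \<le> \<bar>x\<bar> * B" using assms by (simp add: abs_mult mult_left_mono)
  moreover have "\<bar>y * v\<bar> \<le> \<bar>y\<bar> * B" using assms by (simp add: abs_mult mult_left_mono)
  ultimately show ?thesis by (simp add: algebra_simps order_trans[OF abs_triangle_ineq])
qed

definition qV :: "real \<Rightarrow> real \<Rightarrow> real \<Rightarrow> real \<Rightarrow> real \<Rightarrow> real \<Rightarrow> real" where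
  "qV a b c d u v = (a * d - b * c) * (u^2 + v^2) + (a * u + b * v)^2 + (c * u + d * v)^2"

definition qVd :: "real \<Rightarrow> real \<Rightarrow> real \<Rightarrow> real \<Rightarrow> real \<Rightarrow> real \<Rightarrow> real \<Rightarrow> real \<Rightarrow> real" where
  "qVd a b c d u v f1 f2 = 2 * (a * d - b * c) * (u * f1 + v * f2) + 2 * (a * u + b * v) * (a * f1 + b * f2)
      + 2 * (c * u + d * v) * (c * f1 + d * f2)"

lemma lyap_quad:
  fixes a b c d K :: real
  assumes T: "a + d < 0" and D: "a * d - b * c > 0" and K: "K \<ge> 0"
  shows "\<exists>\<gamma>>0. \<exists>\<rho>>0. \<forall>u v. qV a b c d u v \<le> \<rho> \<longrightarrow> u^2 + v^2 \<le> 1 \<and>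
     (\<forall>f1 f2. \<bar>f1 - (a * u + b * v)\<bar> \<le> K * (u^2 + v^2) \<and> \<bar>f2 - (c * u + d * v)\<bar> \<le> K * (u^2 + v^2)
        \<longrightarrow> qVd a b c d u v f1 f2 \<le> - \<gamma> * qV a b c d u v)"
proof -
  define Dd where "Dd = a * d - b * c"
  define Tt where "Tt = a + d"
  define N where "N = a^2 + b^2 + c^2 + d^2"
  define M where "M = 4 * Dd * K + 2 * (\<bar>a\<bar>+\<bar>b\<bar>) * (\<bar>a\<bar>+\<bar>b\<bar>) * K + 2 * (\<bar>c\<bar>+\<bar>d\<bar>) * (\<bar>c\<bar>+\<bar>d\<bar>) * K"
  have Dp: "Dd > 0" using D by (simp add: Dd_def)
  have Tn: "Tt < 0" using T by (simp add: Tt_def)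
  have Np: "N > 0"
  proof (rule ccontr)
    assume "\<not> N > 0"
    then have "a = 0 \<and> b = 0" unfolding N_def by (smt (verit) zero_le_power2 power2_less_eq_zero_iff)
    then show False using D by simp
  qed
  have Mnn: "M \<ge> 0" unfolding M_def using Dp K by simp
  define G where "G = - Tt * Dd^2 / N"
  have Gp: "G > 0" unfolding G_def using Tn Dp Np by (simp add: divide_neg_pos mult_neg_pos)
  define \<delta> where "\<delta> = min 1 (G / (M + 1))"
  have \<delta>p: "\<delta> > 0" unfolding \<delta>_def using Gp Mnn by simp
  have \<delta>1: "\<delta> \<le> 1" unfolding \<delta>_def by simp
  have M\<delta>: "M * \<delta> \<le> G"
  proof -
    have "M * \<delta> \<le> (M + 1) * \<delta>" using \<delta>p by simp
    also have "\<dots> \<le> (M + 1) * (G / (M + 1))" unfolding \<delta>_def using Mnn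
      by (intro mult_left_mono) auto
    also have "\<dots> = G" using Mnn by simp
    finally show ?thesis .
  qed
  define \<gamma> where "\<gamma> = G / (Dd + N)"
  have \<gamma>p: "\<gamma> > 0" unfolding \<gamma>_def using Gp Dp Np by simp
  define \<rho> where "\<rho> = Dd * \<delta>^2"
  have \<rho>p: "\<rho> > 0" unfolding \<rho>_def using Dp \<delta>p by simp
  show ?thesis
  proof (rule exI[of _ \<gamma>], intro conjI \<gamma>p, rule exI[of _ \<rho>], intro conjI \<rho>p allI impI)
    fix u v assume Vr: "qV a b c d u v \<le> \<rho>"
    define n where "n = u^2 + v^2"
    define s where "s = sqrt n"
    define z1 where "z1 = a * u + b * v"
    define z2 where "z2 = c * u + d * v"
    have nn: "n \<ge> 0" unfolding n_def by simp
    have Vdef: "qV a b c d u v = Dd * n + z1^2 + z2^2"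
      unfolding qV_def Dd_def n_def z1_def z2_def by simp
    have VgeD: "Dd * n \<le> qV a b c d u v" unfolding Vdef by simp
    have "Dd * n \<le> Dd * \<delta>^2" using VgeD Vr unfolding \<rho>_def by simp
    then have nd: "n \<le> \<delta>^2" using Dp by simp
    have sd: "s \<le> \<delta>" unfolding s_def using nd \<delta>p
      by (metis abs_of_pos real_sqrt_abs real_sqrt_le_mono)
    have "\<delta>^2 \<le> 1" using \<delta>p \<delta>1 by (simp add: power_le_one)
    then show "u^2 + v^2 \<le> 1" using nd unfolding n_def by simp
      fix f1 f2
      assume R: "\<bar>f1 - (a * u + b * v)\<bar> \<le> K * (u^2 + v^2) \<and> \<bar>f2 - (c * u + d * v)\<bar> \<le> K * (u^2 + v^2)"
      define R1 where "R1 = f1 - z1"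
      define R2 where "R2 = f2 - z2"
      have R1b: "\<bar>R1\<bar> \<le> K * n" using R unfolding R1_def z1_def n_def by simp
      have R2b: "\<bar>R2\<bar> \<le> K * n" using R unfolding R2_def z2_def n_def by simp
      define E where "E = 2 * Dd * (u * R1 + v * R2) + 2 * z1 * (a * R1 + b * R2) + 2 * z2 * (c * R1 + d * R2)"
      have ident: "qVd a b c d u v f1 f2 = 2 * Tt * (z1^2 + z2^2) + E"
        unfolding qVd_def E_def R1_def R2_def Tt_def Dd_def z1_def z2_def
        by (simp add: power2_eq_square algebra_simps)
      have us: "\<bar>u\<bar> \<le> s" "\<bar>v\<bar> \<le> s" unfolding s_def n_def
        using abs_le_sqrt_sum[of u v] abs_le_sqrt_sum[of v u] by (auto simp: add.commute)
      have sn: "s \<ge> 0" unfolding s_def using nn by simp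
      have z1b: "\<bar>z1\<bar> \<le> (\<bar>a\<bar>+\<bar>b\<bar>) * s" unfolding z1_def using lin_bound2[OF us] .
      have z2b: "\<bar>z2\<bar> \<le> (\<bar>c\<bar>+\<bar>d\<bar>) * s" unfolding z2_def using lin_bound2[OF us] .
      have Kn: "K * n \<ge> 0" using K nn by simp
      have e1: "\<bar>u * R1 + v * R2\<bar> \<le> 2 * (s * (K * n))"
      proof -
        have "\<bar>u * R1\<bar> \<le> s * (K * n)" unfolding abs_mult using us R1b sn by (intro mult_mono) auto
        moreover have "\<bar>v * R2\<bar> \<le> s * (K * n)" unfolding abs_mult using us R2b sn by (intro mult_mono) auto
        ultimately show ?thesis by (smt (verit) abs_triangle_ineq)
      qed
      have e2: "\<bar>z1 * (a * R1 + b * R2)\<bar> \<le> ((\<bar>a\<bar>+\<bar>b\<bar>) * s) * ((\<bar>a\<bar>+\<bar>b\<bar>) * (K * n))"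
        unfolding abs_mult using z1b lin_bound2[OF R1b R2b, of a b] by (intro mult_mono) auto
      have e3: "\<bar>z2 * (c * R1 + d * R2)\<bar> \<le> ((\<bar>c\<bar>+\<bar>d\<bar>) * s) * ((\<bar>c\<bar>+\<bar>d\<bar>) * (K * n))"
        unfolding abs_mult using z2b lin_bound2[OF R1b R2b, of c d] by (intro mult_mono) auto
      have Eb: "E \<le> M * s * n"
      proof -
        have "E \<le> 2 * Dd * \<bar>u * R1 + v * R2\<bar> + 2 * \<bar>z1 * (a * R1 + b * R2)\<bar> + 2 * \<bar>z2 * (c * R1 + d * R2)\<bar>"
        proof -
          have "E \<le> \<bar>E\<bar>" by simp
          also have "\<bar>E\<bar> \<le> \<bar>2 * Dd * (u * R1 + v * R2)\<bar> + \<bar>2 * z1 * (a * R1 + b * R2)\<bar> + \<bar>2 * z2 * (c * R1 + d * R2)\<bar>"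
            unfolding E_def by (rule order_trans[OF abs_triangle_ineq add_right_mono[OF abs_triangle_ineq]])
          also have "\<dots> = 2 * Dd * \<bar>u * R1 + v * R2\<bar> + 2 * \<bar>z1 * (a * R1 + b * R2)\<bar> + 2 * \<bar>z2 * (c * R1 + d * R2)\<bar>"
            using Dp by (simp add: abs_mult mult.assoc)
          finally show ?thesis .
        qed
        also have "\<dots> \<le> 2 * Dd * (2 * (s * (K * n))) + 2 * (((\<bar>a\<bar>+\<bar>b\<bar>) * s) * ((\<bar>a\<bar>+\<bar>b\<bar>) * (K * n)))
           + 2 * (((\<bar>c\<bar>+\<bar>d\<bar>) * s) * ((\<bar>c\<bar>+\<bar>d\<bar>) * (K * n)))"
          using e1 e2 e3 Dp by (intro add_mono mult_left_mono) auto
        also have "\<dots> = M * s * n"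
        proof -
          have sq: "\<And>x y::real. \<bar>x\<bar> * (\<bar>x\<bar> * y) = x * (x * y)"
            by (metis abs_mult_self_eq mult.assoc)
          show ?thesis unfolding M_def by (simp add: algebra_simps sq)
        qed
        finally show ?thesis .
      qed
      have Zb: "Dd^2 * n \<le> N * (z1^2 + z2^2)"
      proof -
        have "Dd^2 * n = (d * z1 + (-b) * z2)^2 + ((-c) * z1 + a * z2)^2"
          unfolding Dd_def n_def z1_def z2_def by (simp add: power2_eq_square algebra_simps)
        also have "\<dots> \<le> (d^2 + (-b)^2) * (z1^2 + z2^2) + ((-c)^2 + a^2) * (z1^2 + z2^2)"
          by (intro add_mono cs2)
        also have "\<dots> = N * (z1^2 + z2^2)" unfolding N_def by (simp add: algebra_simps)
        finally show ?thesis .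
      qed
      have VleN: "qV a b c d u v \<le> (Dd + N) * n"
      proof -
        have "z1^2 \<le> (a^2 + b^2) * n" unfolding z1_def n_def by (rule cs2)
        moreover have "z2^2 \<le> (c^2 + d^2) * n" unfolding z2_def n_def by (rule cs2)
        ultimately show ?thesis unfolding Vdef N_def by (simp add: algebra_simps)
      qed
      have Ms: "M * s * n \<le> G * n"
      proof -
        have "M * s \<le> M * \<delta>" using sd Mnn by (simp add: mult_left_mono)
        then have "M * s \<le> G" using M\<delta> by simp
        then show ?thesis using nn by (simp add: mult_right_mono)
      qed
      have Zt: "2 * Tt * (z1^2 + z2^2) \<le> -2 * G * n"
      proof -
        have "Dd^2 * n / N \<le> z1^2 + z2^2" using Zb Np by (simp add: divide_le_eq mult.commute)
        then have "2 * Tt * (z1^2 + z2^2) \<le> 2 * Tt * (Dd^2 * n / N)" using Tn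
          using mult_left_mono_neg[of "Dd^2 * n / N" "z1^2 + z2^2" "2 * Tt"] by simp
        also have "\<dots> = -2 * G * n" unfolding G_def by simp
        finally show ?thesis .
      qed
      have "qVd a b c d u v f1 f2 \<le> - G * n" using ident Eb Ms Zt by linarith
      also have "- G * n = - \<gamma> * ((Dd + N) * n)" unfolding \<gamma>_def using Dp Np by simp
      also have "\<dots> \<le> - \<gamma> * qV a b c d u v" using VleN \<gamma>p by simp
      finally show "qVd a b c d u v f1 f2 \<le> - \<gamma> * qV a b c d u v" .
  qed
qed

lemma lyap_core:
  fixes W W' :: "real \<Rightarrow> real" and I :: "real set"
  assumes I0: "0 \<in> I" and Ipos: "I \<subseteq> {0..}" and Iint: "\<And>t. t \<in> I \<Longrightarrow> {0..t} \<subseteq> I"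
    and deriv: "\<And>t. t \<in> I \<Longrightarrow> (W has_real_derivative W' t) (at t within I)"
    and dec: "\<And>t. t \<in> I \<Longrightarrow> W t \<le> \<rho> \<Longrightarrow> W' t \<le> - \<gamma> * W t"
    and W0: "W 0 < \<rho>" and Wnn: "\<And>t. t \<in> I \<Longrightarrow> W t \<ge> 0" and g: "\<gamma> \<ge> 0"
  shows "\<forall>t\<in>I. W t * exp (\<gamma> * t) \<le> W 0 \<and> W t < \<rho>"
proof -
  define \<phi> where "\<phi> = (\<lambda>\<tau>. W \<tau> * exp (\<gamma> * \<tau>))"
  have step1: "W t * exp (\<gamma> * t) \<le> W 0" if t: "t \<in> I" and below: "\<forall>\<tau>\<in>{0<..<t}. W \<tau> \<le> \<rho>" for t
  proof (cases "t = 0")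
    case True then show ?thesis by simp
  next
    case False
    with t Ipos have tp: "t > 0" by force
    have sub: "{0..t} \<subseteq> I" using Iint t by blast
    have cont: "continuous_on {0..t} \<phi>"
    proof -
      have "continuous_on I W"
        using deriv by (meson DERIV_continuous continuous_on_eq_continuous_within)
      then have "continuous_on {0..t} W" using sub continuous_on_subset by blast
      then show ?thesis unfolding \<phi>_def by (intro continuous_intros)
    qed
    have dz: "(\<phi> has_real_derivative (W' z + \<gamma> * W z) * exp (\<gamma> * z)) (at z)" if z: "0 < z" "z < t" for z
    proof -
      have zI: "z \<in> I" using sub z by auto
      have ss: "{0<..<t} \<subseteq> I" using sub by (auto simp: subset_eq)
      have "(W has_real_derivative W' z) (at z within {0<..<t})"
        using has_field_derivative_subset[OF deriv[OF zI] ss] .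
      moreover have "at z within {0<..<t} = at z"
        using z by (intro at_within_open) auto
      ultimately have "(W has_real_derivative W' z) (at z)" by simp
      then show ?thesis unfolding \<phi>_def
        by (auto intro!: derivative_eq_intros simp: algebra_simps)
    qed
    obtain l z where lz: "0 < z" "z < t" "DERIV \<phi> z :> l" "\<phi> t - \<phi> 0 = (t - 0) * l"
      using MVT[OF tp cont] dz by (meson real_differentiable_def)
    have "l = (W' z + \<gamma> * W z) * exp (\<gamma> * z)"
      using DERIV_unique[OF lz(3) dz[OF lz(1,2)]] .
    moreover have "W' z + \<gamma> * W z \<le> 0"
    proof -
      have zI: "z \<in> I" using sub lz by auto
      have "W z \<le> \<rho>" using below lz by auto
      from dec[OF zI this] show ?thesis by simp
    qed
    ultimately have "l \<le> 0" by (simp add: mult_nonpos_nonneg)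
    then have "t * l \<le> 0" using tp by (simp add: mult_nonneg_nonpos)
    then have "\<phi> t \<le> \<phi> 0" using lz(4) by simp
    then show ?thesis by (simp add: \<phi>_def)
  qed
  have step2: "W t < \<rho>" if t: "t \<in> I" for t
  proof (rule ccontr)
    assume "\<not> W t < \<rho>"
    then have Wt: "W t \<ge> \<rho>" by simp
    define S where "S = {0..t} \<inter> W -` {\<rho>..}"
    have sub: "{0..t} \<subseteq> I" using Iint t by blast
    have "continuous_on I W"
      using deriv by (meson DERIV_continuous continuous_on_eq_continuous_within)
    then have "continuous_on {0..t} W" using sub continuous_on_subset by blast
    then have cS: "closed S" unfolding S_def by (intro continuous_closed_preimage) auto
    have "t \<in> S" using Wt t Ipos by (auto simp: S_def)
    then have ne: "S \<noteq> {}" by auto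
    have bdd: "bdd_below S" unfolding S_def by (rule bdd_belowI[of _ 0]) auto
    define t1 where "t1 = Inf S"
    have t1S: "t1 \<in> S" unfolding t1_def by (rule closed_contains_Inf[OF ne bdd cS])
    then have t1I: "t1 \<in> I" and Wt1: "W t1 \<ge> \<rho>" using sub by (auto simp: S_def)
    have "\<forall>\<tau>\<in>{0<..<t1}. W \<tau> \<le> \<rho>"
    proof
      fix \<tau> assume \<tau>: "\<tau> \<in> {0<..<t1}"
      have "\<tau> \<notin> S"
      proof
        assume "\<tau> \<in> S"
        then have "t1 \<le> \<tau>" unfolding t1_def by (rule cInf_lower[OF _ bdd])
        with \<tau> show False by simp
      qed
      moreover have "\<tau> \<in> {0..t}" using \<tau> t1S by (auto simp: S_def)
      ultimately show "W \<tau> \<le> \<rho>" by (auto simp: S_def)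
    qed
    from step1[OF t1I this] have A: "W t1 * exp (\<gamma> * t1) \<le> W 0" .
    have "t1 \<ge> 0" using t1I Ipos by auto
    then have "exp (\<gamma> * t1) \<ge> 1" using g by simp
    moreover have "W t1 \<ge> 0" using Wnn t1I by simp
    ultimately have "W t1 \<le> W t1 * exp (\<gamma> * t1)"
      by (metis mult_left_mono mult.right_neutral)
    with A W0 Wt1 show False by linarith
  qed
  show ?thesis
  proof
    fix t assume t: "t \<in> I"
    have "\<forall>\<tau>\<in>{0<..<t}. W \<tau> \<le> \<rho>"
      using step2 Iint t by (meson atLeastAtMost_iff greaterThanLessThan_iff less_imp_le subsetD)
    then show "W t * exp (\<gamma> * t) \<le> W 0 \<and> W t < \<rho>" using step1 step2 t by blast
  qed
qed

lemma qV_lower: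
  fixes a b c d u v :: real
  shows "(a * d - b * c) * (u^2 + v^2) \<le> qV a b c d u v"
  unfolding qV_def by simp

lemma qV_upper:
  fixes a b c d u v :: real
  shows "qV a b c d u v \<le> (a * d - b * c + (a^2 + b^2 + c^2 + d^2)) * (u^2 + v^2)"
proof -
  have "(a * u + b * v)^2 \<le> (a^2 + b^2) * (u^2 + v^2)" by (rule cs2)
  moreover have "(c * u + d * v)^2 \<le> (c^2 + d^2) * (u^2 + v^2)" by (rule cs2)
  ultimately show ?thesis
    unfolding qV_def by (simp add: algebra_simps)
qed

lemma dist_pair_eq: "dist y (e1, e2) = sqrt ((fst y - e1)^2 + (snd y - e2)^2)"
  by (cases y) (simp add: dist_Pair_Pair dist_real_def)

lemma sol_deriv:
  fixes F :: "real \<times> real \<Rightarrow> real \<times> real" and x :: "real \<Rightarrow> real \<times> real"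
  assumes sol: "ode_solution F x I" and t: "t \<in> I"
  shows "((\<lambda>t. qV a b c d (fst (x t) - e1) (snd (x t) - e2)) has_real_derivative
     qVd a b c d (fst (x t) - e1) (snd (x t) - e2) (fst (F (x t))) (snd (F (x t)))) (at t within I)"
proof -
  have xd: "(x has_vector_derivative F (x t)) (at t within I)" using sol t unfolding ode_solution_def by blast
  have dp: "((\<lambda>t. fst (x t)) has_real_derivative fst (F (x t))) (at t within I)"
    unfolding has_real_derivative_iff_has_vector_derivative
    by (rule bounded_linear.has_vector_derivative[OF bounded_linear_fst xd])
  have dq: "((\<lambda>t. snd (x t)) has_real_derivative snd (F (x t))) (at t within I)"
    unfolding has_real_derivative_iff_has_vector_derivative
    by (rule bounded_linear.has_vector_derivative[OF bounded_linear_snd xd])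
  show ?thesis unfolding qV_def qVd_def
    by (auto intro!: derivative_eq_intros dp dq simp: power2_eq_square algebra_simps)
qed

lemma exp_decay: "(\<gamma>::real) > 0 \<Longrightarrow> ((\<lambda>t. exp (- \<gamma> * t)) \<longlongrightarrow> 0) at_top"
proof -
  assume g: "\<gamma> > 0"
  have "LIM t at_top. (- \<gamma>) * t :> at_bot"
    by (rule filterlim_tendsto_neg_mult_at_bot[OF tendsto_const]) (use g filterlim_ident in auto)
  from filterlim_compose[OF exp_at_bot this] show ?thesis .
qed

lemma lin_stable:
  fixes F :: "real \<times> real \<Rightarrow> real \<times> real" and e1 e2 a b c d K :: real
  assumes T: "a + d < 0" and D: "a * d - b * c > 0" and K: "K \<ge> 0"
    and R: "\<And>u v. u^2 + v^2 \<le> 1 \<Longrightarrow> \<bar>fst (F (e1 + u, e2 + v)) - (a * u + b * v)\<bar> \<le> K * (u^2 + v^2)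
              \<and> \<bar>snd (F (e1 + u, e2 + v)) - (c * u + d * v)\<bar> \<le> K * (u^2 + v^2)"
  shows "loc_asym_stable F (e1, e2)"
proof -
  obtain \<gamma> \<rho> where \<gamma>p: "\<gamma> > 0" and \<rho>p: "\<rho> > 0" and Q: "\<forall>u v. qV a b c d u v \<le> \<rho> \<longrightarrow> u^2 + v^2 \<le> 1 \<and>
     (\<forall>f1 f2. \<bar>f1 - (a * u + b * v)\<bar> \<le> K * (u^2 + v^2) \<and> \<bar>f2 - (c * u + d * v)\<bar> \<le> K * (u^2 + v^2)
        \<longrightarrow> qVd a b c d u v f1 f2 \<le> - \<gamma> * qV a b c d u v)"
    using lyap_quad[OF T D K] by blast
  define Dd where "Dd = a * d - b * c"
  define C where "C = a * d - b * c + (a^2 + b^2 + c^2 + d^2)"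
  have Dp: "Dd > 0" using D by (simp add: Dd_def)
  have Cp: "C > 0" unfolding C_def using D by (smt (verit) zero_le_power2)
  define P where "P y = qV a b c d (fst y - e1) (snd y - e2)" for y
  have dec: "qVd a b c d (fst y - e1) (snd y - e2) (fst (F y)) (snd (F y)) \<le> - \<gamma> * P y"
    if h: "P y \<le> \<rho>" for y
  proof -
    define u where "u = fst y - e1"
    define v where "v = snd y - e2"
    have y: "y = (e1 + u, e2 + v)" unfolding u_def v_def by simp
    have hh: "qV a b c d u v \<le> \<rho>" using h unfolding P_def u_def v_def .
    have QQ: "u^2 + v^2 \<le> 1 \<and> (\<forall>f1 f2. \<bar>f1 - (a * u + b * v)\<bar> \<le> K * (u^2 + v^2) \<and> \<bar>f2 - (c * u + d * v)\<bar> \<le> K * (u^2 + v^2)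
        \<longrightarrow> qVd a b c d u v f1 f2 \<le> - \<gamma> * qV a b c d u v)"
      using spec[OF spec[OF Q, of u], of v] hh by (rule mp)
    note n1 = conjunct1[OF QQ] and imp = conjunct2[OF QQ]
    have Rb: "\<bar>fst (F y) - (a * u + b * v)\<bar> \<le> K * (u^2 + v^2) \<and> \<bar>snd (F y) - (c * u + d * v)\<bar> \<le> K * (u^2 + v^2)"
      using R[OF n1] y by simp
    have "qVd a b c d u v (fst (F y)) (snd (F y)) \<le> - \<gamma> * qV a b c d u v"
      using spec[OF spec[OF imp, of "fst (F y)"], of "snd (F y)"] Rb by (rule mp)
    then show ?thesis by (simp only: P_def u_def v_def)
  qed
  have Pd: "Dd * (dist y (e1, e2))^2 \<le> P y" "P y \<le> C * (dist y (e1, e2))^2" for y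
  proof -
    have ds: "(dist y (e1, e2))^2 = (fst y - e1)^2 + (snd y - e2)^2"
      unfolding dist_pair_eq by (rule real_sqrt_pow2) simp
    show "Dd * (dist y (e1, e2))^2 \<le> P y" unfolding ds P_def Dd_def by (rule qV_lower)
    show "P y \<le> C * (dist y (e1, e2))^2" unfolding ds P_def C_def by (rule qV_upper)
  qed
  have Pnn: "P y \<ge> 0" for y using Pd(1)[of y] Dp by (smt (verit) mult_nonneg_nonneg zero_le_power2)
  have core: "\<forall>t\<in>I. P (x t) * exp (\<gamma> * t) \<le> P (x 0) \<and> P (x t) < \<rho>'"
    if sol: "ode_solution F x I" and I0: "0 \<in> I" and Ipos: "I \<subseteq> {0..}" and Iint: "\<And>t. t \<in> I \<Longrightarrow> {0..t} \<subseteq> I"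
      and r: "\<rho>' \<le> \<rho>" and W0: "P (x 0) < \<rho>'" for x I \<rho>'
  proof (rule lyap_core[where W = "\<lambda>t. P (x t)" and W' = "\<lambda>t. qVd a b c d (fst (x t) - e1) (snd (x t) - e2) (fst (F (x t))) (snd (F (x t)))"])
    show "0 \<in> I" "I \<subseteq> {0..}" by fact+
    show "\<And>t. t \<in> I \<Longrightarrow> {0..t} \<subseteq> I" by (rule Iint)
    show "\<And>t. t \<in> I \<Longrightarrow> ((\<lambda>t. P (x t)) has_real_derivative qVd a b c d (fst (x t) - e1) (snd (x t) - e2) (fst (F (x t))) (snd (F (x t)))) (at t within I)"
      unfolding P_def by (rule sol_deriv[OF sol])
    show "\<And>t. t \<in> I \<Longrightarrow> P (x t) \<le> \<rho>' \<Longrightarrow> qVd a b c d (fst (x t) - e1) (snd (x t) - e2) (fst (F (x t))) (snd (F (x t))) \<le> - \<gamma> * P (x t)"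
    proof -
      fix t assume "t \<in> I" "P (x t) \<le> \<rho>'"
      then have "P (x t) \<le> \<rho>" using r by linarith
      then show "qVd a b c d (fst (x t) - e1) (snd (x t) - e2) (fst (F (x t))) (snd (F (x t))) \<le> - \<gamma> * P (x t)"
        by (rule dec)
    qed
    show "P (x 0) < \<rho>'" by fact
    show "\<And>t. t \<in> I \<Longrightarrow> 0 \<le> P (x t)" using Pnn by blast
    show "0 \<le> \<gamma>" using \<gamma>p by simp
  qed
  have Iint1: "{0..t} \<subseteq> {0..<T}" if "t \<in> {0..<T}" for t T :: real using that by auto
  have Iint2: "{0..t} \<subseteq> {0..}" for t :: real by auto
  have stab: "\<exists>\<delta>>0. \<forall>T>0. \<forall>x. ode_solution F x {0..<T} \<and> dist (x 0) (e1, e2) < \<delta>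
                \<longrightarrow> (\<forall>t\<in>{0..<T}. dist (x t) (e1, e2) < \<epsilon>)" if \<epsilon>: "\<epsilon> > 0" for \<epsilon>
  proof -
    define \<rho>' where "\<rho>' = min \<rho> (Dd * \<epsilon>^2)"
    have \<rho>'p: "\<rho>' > 0" unfolding \<rho>'_def using \<rho>p Dp \<epsilon> by simp
    define \<delta> where "\<delta> = sqrt (\<rho>' / C)"
    have \<delta>p: "\<delta> > 0" unfolding \<delta>_def using \<rho>'p Cp by simp
    show ?thesis
    proof (intro exI[of _ \<delta>] conjI \<delta>p allI impI ballI)
      fix T :: real and x t
      assume h: "0 < T" "ode_solution F x {0..<T} \<and> dist (x 0) (e1, e2) < \<delta>" and t: "t \<in> {0..<T}"
      have "(dist (x 0) (e1, e2))^2 < \<delta>^2" using h by (intro power_strict_mono) auto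
      then have "(dist (x 0) (e1, e2))^2 < \<rho>' / C" unfolding \<delta>_def using \<rho>'p Cp by simp
      then have "C * (dist (x 0) (e1, e2))^2 < \<rho>'" using Cp by (simp add: field_simps)
      then have W0: "P (x 0) < \<rho>'" using Pd(2)[of "x 0"] by linarith
      have "\<forall>t\<in>{0..<T}. P (x t) * exp (\<gamma> * t) \<le> P (x 0) \<and> P (x t) < \<rho>'"
        by (rule core[of x "{0..<T}" \<rho>']) (use h W0 in \<open>auto simp: \<rho>'_def\<close>)
      then have "P (x t) < \<rho>'" using t by blast
      then have "Dd * (dist (x t) (e1, e2))^2 < Dd * \<epsilon>^2" using Pd(1)[of "x t"] unfolding \<rho>'_def by linarith
      then have "(dist (x t) (e1, e2))^2 < \<epsilon>^2" using Dp by simp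
      then show "dist (x t) (e1, e2) < \<epsilon>" using \<epsilon> by (smt (verit) power_mono zero_le_dist)
    qed
  qed
  have attr: "\<exists>\<delta>>0. \<forall>x. ode_solution F x {0..} \<and> dist (x 0) (e1, e2) < \<delta> \<longrightarrow> (x \<longlongrightarrow> (e1, e2)) at_top"
  proof -
    define \<delta> where "\<delta> = sqrt (\<rho> / C)"
    have \<delta>p: "\<delta> > 0" unfolding \<delta>_def using \<rho>p Cp by simp
    show ?thesis
    proof (intro exI[of _ \<delta>] conjI \<delta>p allI impI)
      fix x assume h: "ode_solution F x {0..} \<and> dist (x 0) (e1, e2) < \<delta>"
      have "(dist (x 0) (e1, e2))^2 < \<delta>^2" using h by (intro power_strict_mono) auto
      then have "(dist (x 0) (e1, e2))^2 < \<rho> / C" unfolding \<delta>_def using \<rho>p Cp by simp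
      then have "C * (dist (x 0) (e1, e2))^2 < \<rho>" using Cp by (simp add: field_simps)
      then have W0: "P (x 0) < \<rho>" using Pd(2)[of "x 0"] by linarith
      have cc: "\<forall>t\<in>{0..}. P (x t) * exp (\<gamma> * t) \<le> P (x 0) \<and> P (x t) < \<rho>"
        by (rule core[of x "{0..}" \<rho>]) (use h W0 in auto)
      have bnd: "dist (x t) (e1, e2) \<le> sqrt (P (x 0) * exp (- \<gamma> * t) / Dd)" if t: "t \<ge> 0" for t
      proof -
        have "P (x t) * exp (\<gamma> * t) \<le> P (x 0)" using cc t by auto
        then have "P (x t) \<le> P (x 0) * exp (- \<gamma> * t)"
          by (simp add: exp_minus field_simps)
        then have "Dd * (dist (x t) (e1, e2))^2 \<le> P (x 0) * exp (- \<gamma> * t)" using Pd(1)[of "x t"] by linarith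
        then have "(dist (x t) (e1, e2))^2 \<le> P (x 0) * exp (- \<gamma> * t) / Dd" using Dp by (simp add: field_simps)
        then have "sqrt ((dist (x t) (e1, e2))^2) \<le> sqrt (P (x 0) * exp (- \<gamma> * t) / Dd)"
          by (rule real_sqrt_le_mono)
        then show ?thesis by simp
      qed
      have lim: "((\<lambda>t. sqrt (P (x 0) * exp (- \<gamma> * t) / Dd)) \<longlongrightarrow> sqrt (P (x 0) * 0 / Dd)) at_top"
      proof -
        have e0: "((\<lambda>t. exp (- \<gamma> * t)) \<longlongrightarrow> 0) at_top" by (rule exp_decay[OF \<gamma>p])
        have "((\<lambda>t. P (x 0) * exp (- \<gamma> * t)) \<longlongrightarrow> P (x 0) * 0) at_top"
          by (rule tendsto_mult_left[OF e0])
        then have "((\<lambda>t. P (x 0) * exp (- \<gamma> * t) / Dd) \<longlongrightarrow> P (x 0) * 0 / Dd) at_top"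
          using Dp by (intro tendsto_divide tendsto_const) auto
        then show ?thesis by (rule tendsto_real_sqrt)
      qed
      have ev1: "\<forall>\<^sub>F t in at_top. 0 \<le> dist (x t) (e1, e2)" by simp
      have ev2: "\<forall>\<^sub>F t in at_top. dist (x t) (e1, e2) \<le> sqrt (P (x 0) * exp (- \<gamma> * t) / Dd)"
        using eventually_ge_at_top[of 0] by (rule eventually_mono) (rule bnd)
      have l2: "((\<lambda>t. sqrt (P (x 0) * exp (- \<gamma> * t) / Dd)) \<longlongrightarrow> 0) at_top" using lim by simp
      have "((\<lambda>t. dist (x t) (e1, e2)) \<longlongrightarrow> 0) at_top"
        by (rule tendsto_sandwich[OF ev1 ev2 tendsto_const l2])
      then show "(x \<longlongrightarrow> (e1, e2)) at_top" unfolding tendsto_dist_iff[of x] .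
    qed
  qed
  have stab': "\<forall>\<epsilon>>0. \<exists>\<delta>>0. \<forall>T>0. \<forall>x. ode_solution F x {0..<T} \<and> dist (x 0) (e1, e2) < \<delta>
                \<longrightarrow> (\<forall>t\<in>{0..<T}. dist (x t) (e1, e2) < \<epsilon>)"
  proof (intro allI impI)
    fix \<epsilon> :: real assume "\<epsilon> > 0"
    then show "\<exists>\<delta>>0. \<forall>T>0. \<forall>x. ode_solution F x {0..<T} \<and> dist (x 0) (e1, e2) < \<delta>
                \<longrightarrow> (\<forall>t\<in>{0..<T}. dist (x t) (e1, e2) < \<epsilon>)" by (rule stab)
  qed
  show ?thesis unfolding loc_asym_stable_def using conjI[OF stab' attr] .
qed

lemma tri5: fixes A B C D E :: real shows "\<bar>A - B - C - D - E\<bar> \<le> \<bar>A\<bar> + \<bar>B\<bar> + \<bar>C\<bar> + \<bar>D\<bar> + \<bar>E\<bar>"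
proof -
  have "\<bar>A - B - C - D - E\<bar> \<le> \<bar>A - B - C - D\<bar> + \<bar>E\<bar>" by (rule abs_triangle_ineq4)
  moreover have "\<bar>A - B - C - D\<bar> \<le> \<bar>A - B - C\<bar> + \<bar>D\<bar>" by (rule abs_triangle_ineq4)
  moreover have "\<bar>A - B - C\<bar> \<le> \<bar>A - B\<bar> + \<bar>C\<bar>" by (rule abs_triangle_ineq4)
  moreover have "\<bar>A - B\<bar> \<le> \<bar>A\<bar> + \<bar>B\<bar>" by (rule abs_triangle_ineq4)
  ultimately show ?thesis by linarith
qed

lemma rem_bound:
  fixes u v k0 p q :: real
  assumes n1: "u^2 + v^2 \<le> 1" and p: "p \<ge> 0" and q: "q \<ge> 0"
  shows "\<bar>u * v * k0 - p * u^2 - q * v^2 - u^2 * v - u * v^2\<bar> \<le> (\<bar>k0\<bar> + p + q + 2) * (u^2 + v^2)"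
proof -
  define n where "n = u^2 + v^2"
  have uv: "\<bar>u * v\<bar> \<le> n" unfolding n_def
  proof -
    have "(\<bar>u\<bar> - \<bar>v\<bar>)^2 = u^2 + v^2 - 2 * \<bar>u * v\<bar>"
      by (simp add: power2_diff abs_mult)
    moreover have "0 \<le> (\<bar>u\<bar> - \<bar>v\<bar>)^2" by simp
    ultimately have "2 * \<bar>u * v\<bar> \<le> u^2 + v^2" by linarith
    moreover have "\<bar>u * v\<bar> \<ge> 0" by simp
    ultimately show "\<bar>u * v\<bar> \<le> u^2 + v^2" by linarith
  qed
  have u2: "u^2 \<le> n" and v2: "v^2 \<le> n" unfolding n_def by simp_all
  have "v^2 \<le> 1" using n1 zero_le_power2[of u] by linarith
  then have v1: "\<bar>v\<bar> \<le> 1" by (simp only: abs_square_le_1)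
  have "u^2 \<le> 1" using n1 zero_le_power2[of v] by linarith
  then have u1: "\<bar>u\<bar> \<le> 1" by (simp only: abs_square_le_1)
  have t1: "\<bar>u * v * k0\<bar> \<le> \<bar>k0\<bar> * n"
  proof -
    have "\<bar>u * v * k0\<bar> = \<bar>k0\<bar> * \<bar>u * v\<bar>" by (simp add: abs_mult)
    also have "\<dots> \<le> \<bar>k0\<bar> * n" using uv by (intro mult_left_mono) auto
    finally show ?thesis .
  qed
  have t2: "\<bar>p * u^2\<bar> \<le> p * n" using u2 p by (simp add: abs_mult mult_left_mono)
  have t3: "\<bar>q * v^2\<bar> \<le> q * n" using v2 q by (simp add: abs_mult mult_left_mono)
  have t4: "\<bar>u^2 * v\<bar> \<le> n"
  proof -
    have "\<bar>u^2 * v\<bar> = u^2 * \<bar>v\<bar>" by (simp add: abs_mult)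
    also have "\<dots> \<le> u^2 * 1" using v1 by (intro mult_left_mono) auto
    finally show ?thesis using u2 by simp
  qed
  have t5: "\<bar>u * v^2\<bar> \<le> n"
  proof -
    have "\<bar>u * v^2\<bar> = \<bar>u\<bar> * v^2" by (simp add: abs_mult)
    also have "\<dots> \<le> 1 * v^2" using u1 by (intro mult_right_mono) auto
    finally show ?thesis using v2 by simp
  qed
  have "\<bar>u * v * k0 - p * u^2 - q * v^2 - u^2 * v - u * v^2\<bar>
      \<le> \<bar>u * v * k0\<bar> + \<bar>p * u^2\<bar> + \<bar>q * v^2\<bar> + \<bar>u^2 * v\<bar> + \<bar>u * v^2\<bar>" by (rule tri5)
  also have "\<dots> \<le> \<bar>k0\<bar> * n + p * n + q * n + n + n" using t1 t2 t3 t4 t5 by linarith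
  also have "\<dots> = (\<bar>k0\<bar> + p + q + 2) * n" by (simp add: algebra_simps)
  finally show ?thesis unfolding n_def .
qed

lemma div_helper: fixes X Y :: real assumes "X \<noteq> 0" "Y \<noteq> 0" shows "X / (2 * (X * Y)) = 1 / (2 * Y)"
  using assms by (simp add: field_simps)

theorem mainTheorem2:
  fixes r \<alpha> h s fi :: real
  assumes A: "0 < r" "r < 1" "\<alpha> > 0" "h \<ge> 0" "0 \<le> s" "s < 1"
    and fip: "fi > 0"
    and "r * \<alpha> * fhms_mu r h s * fi * (1 - (1 + fhms_mu r h s) * fi) = 1 + h"
    and "r * (1 - s) / (2 * (1 + h - r * (h + s))) < fi"
    and "fi < r * (1 - s) / (1 + h - r * (h + s))"
  shows "loc_asym_stable (fhms_field r \<alpha> h s) (fi, fhms_mu r h s * fi)"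
proof -
  define \<mu> where "\<mu> = fhms_mu r h s"
  define mi where "mi = \<mu> * fi"
  define L where "L = 1 - fi - mi"
  define P where "P = \<alpha> * fi * mi"
  have r1: "1 - r > 0" "1 - s > 0" "1 + h > 0" using A by auto
  have rs: "r * (1 - s) > 0" using A by simp
  have \<mu>p: "\<mu> > 0" unfolding \<mu>_def fhms_mu_def using r1 rs by (simp add: divide_pos_pos)
  have \<mu>rel: "\<mu> * (r * (1 - s)) = (1 - r) * (1 + h)"
  proof -
    have "\<mu> = ((1 - r) * (1 + h)) / (r * (1 - s))" by (simp add: \<mu>_def fhms_mu_def)
    moreover have "r * (1 - s) \<noteq> 0" using rs by linarith
    ultimately show ?thesis using nonzero_eq_divide_eq by blast
  qed
  have mip: "mi > 0" unfolding mi_def using \<mu>p fip by simp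
  have Pp: "P > 0" unfolding P_def using mip fip A by simp
  have eq: "r * \<alpha> * mi * L = 1 + h"
  proof -
    have "r * \<alpha> * mi * L = r * \<alpha> * \<mu> * fi * (1 - (1 + \<mu>) * fi)"
      unfolding mi_def L_def by (simp add: algebra_simps)
    also have "\<dots> = 1 + h" using assms(8) unfolding \<mu>_def .
    finally show ?thesis .
  qed
  have Lp: "L > 0"
  proof -
    have "(r * \<alpha> * mi) * L > 0" using eq r1 by linarith
    moreover have "r * \<alpha> * mi > 0" using A mip by simp
    ultimately show ?thesis by (simp add: zero_less_mult_iff)
  qed
  have eq2: "(1 - r) * \<alpha> * fi * L = 1 - s"
  proof -
    have "((1 - r) * \<alpha> * fi * L) * (r * \<mu>) = (1 - r) * (r * \<alpha> * mi * L)"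
      unfolding mi_def by (simp add: algebra_simps)
    also have "\<dots> = (1 - s) * (r * \<mu>)" using eq \<mu>rel by (simp add: algebra_simps)
    finally show ?thesis using \<mu>p A(1) by simp
  qed
  have low: "2 * (fi + mi) - 1 > 0"
  proof -
    have e: "1 + h - r * (h + s) = r * (1 - s) * (1 + \<mu>)" using \<mu>rel by (simp add: algebra_simps)
    have "r * (1 - s) / (2 * (r * (1 - s) * (1 + \<mu>))) < fi" using assms(9) unfolding e .
    moreover have "r * (1 - s) / (2 * (r * (1 - s) * (1 + \<mu>))) = 1 / (2 * (1 + \<mu>))"
      by (rule div_helper) (use rs \<mu>p in linarith)+
    ultimately have "1 / (2 * (1 + \<mu>)) < fi" by simp
    then have "1 < fi * (2 * (1 + \<mu>))" using \<mu>p by (simp add: divide_less_eq)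
    then show ?thesis unfolding mi_def by (simp add: algebra_simps)
  qed
  define a where "a = r * (\<alpha> * mi * L - P) - (1 + h)"
  define b where "b = r * (\<alpha> * fi * L - P)"
  define c where "c = (1 - r) * (\<alpha> * mi * L - P)"
  define d where "d = (1 - r) * (\<alpha> * fi * L - P) + s - 1"
  have a': "a = - r * P" unfolding a_def using eq by (simp add: algebra_simps)
  have d': "d = - (1 - r) * P" unfolding d_def using eq2 by (simp add: algebra_simps)
  have T: "a + d < 0" unfolding a' d' using Pp by (simp add: algebra_simps)
  have Dexp: "a * d - b * c = r * (1 - r) * (\<alpha> * \<alpha> * fi * mi * L) * (2 * (fi + mi) - 1)"
    unfolding a' d' b_def c_def P_def L_def by (simp add: algebra_simps)
  have D: "a * d - b * c > 0" unfolding Dexp using A fip r1 mip Lp low by simp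
  define K where "K = \<alpha> * (\<bar>1 - 2 * fi - 2 * mi\<bar> + mi + fi + 2)"
  have K: "K \<ge> 0" unfolding K_def using A mip by simp
  define Rm where "Rm u v = \<alpha> * (u * v * (1 - 2 * fi - 2 * mi) - mi * u^2 - fi * v^2 - u^2 * v - u * v^2)" for u v
  have Rmb: "\<bar>Rm u v\<bar> \<le> K * (u^2 + v^2)" if "u^2 + v^2 \<le> 1" for u v
  proof -
    have "\<bar>Rm u v\<bar> = \<alpha> * \<bar>u * v * (1 - 2 * fi - 2 * mi) - mi * u^2 - fi * v^2 - u^2 * v - u * v^2\<bar>"
      unfolding Rm_def using A by (simp add: abs_mult)
    also have "\<dots> \<le> \<alpha> * ((\<bar>1 - 2 * fi - 2 * mi\<bar> + mi + fi + 2) * (u^2 + v^2))"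
      using rem_bound[OF that, of mi fi "1 - 2 * fi - 2 * mi"] mip fip A by (intro mult_left_mono) auto
    finally show ?thesis unfolding K_def by (simp add: mult.assoc)
  qed
  have F1: "fst (fhms_field r \<alpha> h s (fi + u, mi + v)) = fi * (r * \<alpha> * mi * L - (1 + h)) + (a * u + b * v) + r * Rm u v" for u v
    unfolding fhms_field_def a_def b_def Rm_def L_def P_def by (simp add: power2_eq_square algebra_simps)
  have F2: "snd (fhms_field r \<alpha> h s (fi + u, mi + v)) = mi * ((1 - r) * \<alpha> * fi * L - (1 - s)) + (c * u + d * v) + (1 - r) * Rm u v" for u v
    unfolding fhms_field_def c_def d_def Rm_def L_def P_def by (simp add: power2_eq_square algebra_simps)
  have R: "\<bar>fst (fhms_field r \<alpha> h s (fi + u, mi + v)) - (a * u + b * v)\<bar> \<le> K * (u^2 + v^2)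
        \<and> \<bar>snd (fhms_field r \<alpha> h s (fi + u, mi + v)) - (c * u + d * v)\<bar> \<le> K * (u^2 + v^2)"
    if n1: "u^2 + v^2 \<le> 1" for u v
  proof
    have "\<bar>fst (fhms_field r \<alpha> h s (fi + u, mi + v)) - (a * u + b * v)\<bar> = r * \<bar>Rm u v\<bar>"
      unfolding F1 eq using A by (simp add: abs_mult)
    also have "\<dots> \<le> 1 * \<bar>Rm u v\<bar>" using A by (intro mult_right_mono) auto
    finally show "\<bar>fst (fhms_field r \<alpha> h s (fi + u, mi + v)) - (a * u + b * v)\<bar> \<le> K * (u^2 + v^2)"
      using Rmb[OF n1] by simp
  next
    have "\<bar>snd (fhms_field r \<alpha> h s (fi + u, mi + v)) - (c * u + d * v)\<bar> = (1 - r) * \<bar>Rm u v\<bar>"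
      unfolding F2 eq2 using r1 by (simp add: abs_mult)
    also have "\<dots> \<le> 1 * \<bar>Rm u v\<bar>" using A by (intro mult_right_mono) auto
    finally show "\<bar>snd (fhms_field r \<alpha> h s (fi + u, mi + v)) - (c * u + d * v)\<bar> \<le> K * (u^2 + v^2)"
      using Rmb[OF n1] by simp
  qed
  have "loc_asym_stable (fhms_field r \<alpha> h s) (fi, mi)"
    by (rule lin_stable[OF T D K R])
  then show ?thesis unfolding mi_def \<mu>_def .
qed

end
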